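(* (Soundness of $\mathcal{T}_{\mathrm{EFO}}$.) Every branch that is refutable in the tableau calculus $\mathcal{T}_{\mathrm{EFO}}$ is unsatisfiable.
   Context: Types: a countable set of base types including a distinguished $o$; other base types are sorts ($\alpha$). Types: base types and $\sigma\tau$ (functions from $\sigma$ to $\tau$; $\sigma\tau\mu=\sigma(\tau\mu)$). Countably many names with unique types, infinitely many per type. Terms: names; $st:\mu$ for $s:\tau\mu,t:\tau$; $\lambda x.t:\sigma\tau$ for a name $x:\sigma$, $t:\tau$. Logical constants: $\neg:oo$, $\to:ooo$, $=_\sigma:\sigma\sigma o$ for every type $\sigma$, and $\forall_\alpha:(\alpha o)o$ for every sort $\alpha$; all other names are variables. Formulas: terms of type $o$; $s=_\sigma t$ is $(=_\sigma s)t$, $s\neq_\sigma t$ is $\neg(s=_\sigma t)$, $s\to t$ is $(\to s)t$. A term is EFO if the only logical constants occurring in it are $\neg$, $\to$, $=_\alpha$ and $\forall_\alpha$ ($\alpha$ sorts); $\mathrm{EFO}_\sigma$ is the set of EFO terms of type $\sigma$. A formula is quasi-EFO if it is EFO or of the form $s\neq_\sigma t$ with $s,t$ EFO and $\sigma$ any type. Semantics: a frame $\mathcal{D}$ maps types to nonempty sets with $\mathcal{D}(\sigma\tau)\subseteq(\mathcal{D}\sigma\to\mathcal{D}\tau)$. An assignment $\mathcal{I}$ into $\mathcal{D}$ extends $\mathcal{D}$ and maps names $x:\sigma$ into $\mathcal{D}\sigma$; $\mathcal{I}^x_a$ is the update. Partial evaluation: $\hat{\mathcal{I}}x=\mathcal{I}x$;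 $\hat{\mathcal{I}}(st)=(\hat{\mathcal{I}}s)(\hat{\mathcal{I}}t)$ when defined; $\hat{\mathcal{I}}(\lambda x.s)=f$ if $\lambda x.s:\sigma\tau$, $f\in\mathcal{D}(\sigma\tau)$ and $\widehat{\mathcal{I}^x_a}s=fa$ for all $a\in\mathcal{D}\sigma$. An interpretation is an assignment with total evaluation. It is logical if $\mathcal{I}o=\{0,1\}$, $\mathcal{I}(\neg)$ is negation, $\mathcal{I}(\to)$ is implication, $\mathcal{I}(=_\sigma)$ is identity on $\mathcal{I}\sigma$, and $\mathcal{I}(\forall_\alpha)f=1$ iff $f$ is the constant function with value $1$. A set of formulas is satisfiable if some logical interpretation evaluates each of them to $1$. Normalization: fixed type-preserving total $[\cdot]$; $s$ normal iff $[s]=s$; (N1) $[[s]]=[s]$; (N2) $[[s]t]=[st]$; (N3) $[ys_1\dots s_n]=y[s_1]\dots[s_n]$ for a name $y$, $n\ge0$, $ys_1\dots s_n$ of base type; (N4) $\hat{\mathcal{I}}[s]=\hat{\mathcal{I}}s$ for every interpretation. Calculus $\mathcal{T}_{\mathrm{EFO}}$: an EFO branch is a set of normal quasi-EFO formulas. A rule instance $A/A_1\dots A_n$ has $A$ a finite EFO branch containing the premises, $A_i=A\cup$(formulas of the $i$-th alternative). A term $u$ is $\alpha$-discriminating in $A$ if $u\neq_\alpha t\in A$ or $t\neq_\alpha u\in A$ for some $t$. Rules ($x$ a variable): $\neg\neg s$ / $s$; $s\neq_ot$ / $\{s,\neg t\}\mid\{\neg s,t\}$; $s\to t$ / $\neg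 s\mid t$; $\neg(s\to t)$ / $\{s,\neg t\}$; (Mat) $xs_1\dots s_n,\neg xt_1\dots t_n$ / $s_1\neq t_1\mid\dots\mid s_n\neq t_n$ ($n\ge0$); (Dec) $xs_1\dots s_n\neq_\alpha xt_1\dots t_n$ / $s_1\neq t_1\mid\dots\mid s_n\neq t_n$ ($n\ge0$); (FE) $s\neq_{\sigma\tau}t$ / $[sx]\neq[tx]$ with $x:\sigma$ not free in $A$; (Con) $s=_\alpha t,u\neq_\alpha v$ / $\{s\neq u,t\neq u\}\mid\{s\neq v,t\neq v\}$; (All) $\forall_\alpha s$ / $[su]$ for normal $u\in\mathrm{EFO}_\alpha$; (AllN) $\neg\forall_\alpha s$ / $\neg[sx]$ with $x:\alpha$ not free in $A$. Restrictions: FE on $s\neq t$ only if no variable $x$ has $[sx]\neq[tx]\in A$; AllN on $\neg\forall_\alpha s$ only if no variable $x:\alpha$ has $\neg[sx]\in A$; All on $\forall_\alpha s\in A$: if there are $\alpha$-discriminating terms in $A$, only with those; if $[su]\notin A$ for all normal $u\in\mathrm{Wff}_\alpha$, there are no $\alpha$-discriminating terms in $A$ and some variable of type $\alpha$ occurs free in $A$, only with a variable $x:\alpha$ occurring free in $A$; if $[su]\notin A$ for all normal $u\in\mathrm{Wff}_\alpha$, there are no $\alpha$-discriminating terms and no variable of type $\alpha$ occurs free in $A$, only with a variable $x:\alpha$. Refutable branches: least set such that if $A/A_1\dots A_n$ is an admitted instance and all $A_i$ are refutable then $A$ is refutable. *)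

theory Defs
  imports Main
begin

text \<open>Base types are Base n; the distinguished type o is Base 0, the sorts are Base (Suc n).\<close>
datatype ty = Base nat | Fn ty ty

abbreviation tyo :: ty where "tyo \<equiv> Base 0"

definition is_sort :: "ty \<Rightarrow> bool" where
  "is_sort \<sigma> \<longleftrightarrow> (\<exists>n. \<sigma> = Base (Suc n))"

datatype name = Var nat ty | NegC | ImpC | EqC ty | AllC nat

fun nty :: "name \<Rightarrow> ty" where
  "nty (Var n \<sigma>) = \<sigma>"
| "nty NegC = Fn tyo tyo"
| "nty ImpC = Fn tyo (Fn tyo tyo)"
| "nty (EqC \<sigma>) = Fn \<sigma> (Fn \<sigma> tyo)"
| "nty (AllC n) = Fn (Fn (Base (Suc n)) tyo) tyo"

fun is_var :: "name \<Rightarrow> bool" where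
  "is_var (Var _ _) = True"
| "is_var _ = False"

datatype tm = Nm name | App tm tm | Lam name tm

fun typeof :: "tm \<Rightarrow> ty option" where
  "typeof (Nm x) = Some (nty x)"
| "typeof (App s t) = (case typeof s of
      Some (Fn \<sigma> \<tau>) \<Rightarrow> (if typeof t = Some \<sigma> then Some \<tau> else None)
    | _ \<Rightarrow> None)"
| "typeof (Lam x s) = map_option (Fn (nty x)) (typeof s)"

definition is_term :: "tm \<Rightarrow> bool" where
  "is_term t \<longleftrightarrow> typeof t \<noteq> None"

definition tyof :: "tm \<Rightarrow> ty" where
  "tyof t = the (typeof t)"

fun names :: "tm \<Rightarrow> name set" where
  "names (Nm x) = {x}"
| "names (App s t) = names s \<union> names t"
| "names (Lam x s) = insert x (names s)"

fun free :: "tm \<Rightarrow> name set" where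
  "free (Nm x) = {x}"
| "free (App s t) = free s \<union> free t"
| "free (Lam x s) = free s - {x}"

definition free_set :: "tm set \<Rightarrow> name set" where
  "free_set A = (\<Union>s\<in>A. free s)"

definition apps :: "tm \<Rightarrow> tm list \<Rightarrow> tm" where
  "apps h ss = foldl App h ss"

definition neg :: "tm \<Rightarrow> tm" where "neg s = App (Nm NegC) s"
definition imp :: "tm \<Rightarrow> tm \<Rightarrow> tm" where "imp s t = App (App (Nm ImpC) s) t"
definition eq :: "ty \<Rightarrow> tm \<Rightarrow> tm \<Rightarrow> tm" where "eq \<sigma> s t = App (App (Nm (EqC \<sigma>)) s) t"
definition neq :: "ty \<Rightarrow> tm \<Rightarrow> tm \<Rightarrow> tm" where "neq \<sigma> s t = neg (eq \<sigma> s t)"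
definition all :: "nat \<Rightarrow> tm \<Rightarrow> tm" where "all n s = App (Nm (AllC n)) s"

text \<open>Elements of D (Fn sigma tau) are (extensionally, via ap) functions from
  D sigma to D tau, i.e. D(sigma tau) is a subset of D sigma \<rightarrow> D tau.\<close>
definition frame :: "(ty \<Rightarrow> 'u set) \<Rightarrow> ('u \<Rightarrow> 'u \<Rightarrow> 'u) \<Rightarrow> bool" where
  "frame D ap \<longleftrightarrow>
     (\<forall>\<sigma>. D \<sigma> \<noteq> {}) \<and>
     (\<forall>\<sigma> \<tau>. \<forall>f\<in>D (Fn \<sigma> \<tau>). \<forall>a\<in>D \<sigma>. ap f a \<in> D \<tau>) \<and>
     (\<forall>\<sigma> \<tau>. \<forall>f\<in>D (Fn \<sigma> \<tau>). \<forall>g\<in>D (Fn \<sigma> \<tau>).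
         (\<forall>a\<in>D \<sigma>. ap f a = ap g a) \<longrightarrow> f = g)"

definition assignment :: "(ty \<Rightarrow> 'u set) \<Rightarrow> ('u \<Rightarrow> 'u \<Rightarrow> 'u) \<Rightarrow> (name \<Rightarrow> 'u) \<Rightarrow> bool" where
  "assignment D ap I \<longleftrightarrow> frame D ap \<and> (\<forall>x. I x \<in> D (nty x))"

fun eval :: "(ty \<Rightarrow> 'u set) \<Rightarrow> ('u \<Rightarrow> 'u \<Rightarrow> 'u) \<Rightarrow> (name \<Rightarrow> 'u) \<Rightarrow> tm \<Rightarrow> 'u option" where
  "eval D ap I (Nm x) = Some (I x)"
| "eval D ap I (App s t) = (case (eval D ap I s, eval D ap I t) of
      (Some f, Some a) \<Rightarrow> Some (ap f a)
    | _ \<Rightarrow> None)"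
| "eval D ap I (Lam x s) =
     (if typeof (Lam x s) \<noteq> None \<and>
         (\<exists>f\<in>D (tyof (Lam x s)). \<forall>a\<in>D (nty x). eval D ap (I(x := a)) s = Some (ap f a))
      then Some (THE f. f \<in> D (tyof (Lam x s)) \<and>
                       (\<forall>a\<in>D (nty x). eval D ap (I(x := a)) s = Some (ap f a)))
      else None)"

definition is_interp :: "(ty \<Rightarrow> 'u set) \<Rightarrow> ('u \<Rightarrow> 'u \<Rightarrow> 'u) \<Rightarrow> (name \<Rightarrow> 'u) \<Rightarrow> bool" where
  "is_interp D ap I \<longleftrightarrow> assignment D ap I \<and> (\<forall>t. is_term t \<longrightarrow> eval D ap I t \<noteq> None)"

text \<open>tt and ff play the roles of 1 and 0.\<close>
definition logical :: "(ty \<Rightarrow> 'u set) \<Rightarrow> ('u \<Rightarrow> 'u \<Rightarrow> 'u) \<Rightarrow> (name \<Rightarrow> 'u) \<Rightarrow> 'u \<Rightarrow> 'u \<Rightarrow> bool" where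
  "logical D ap I tt ff \<longleftrightarrow> is_interp D ap I \<and> tt \<noteq> ff \<and> D tyo = {tt, ff} \<and>
     (\<forall>a\<in>D tyo. ap (I NegC) a = (if a = tt then ff else tt)) \<and>
     (\<forall>a\<in>D tyo. \<forall>b\<in>D tyo. ap (ap (I ImpC) a) b = (if a = tt \<and> b = ff then ff else tt)) \<and>
     (\<forall>\<sigma>. \<forall>a\<in>D \<sigma>. \<forall>b\<in>D \<sigma>. ap (ap (I (EqC \<sigma>)) a) b = (if a = b then tt else ff)) \<and>
     (\<forall>n. \<forall>f\<in>D (Fn (Base (Suc n)) tyo).
         ap (I (AllC n)) f = tt \<longleftrightarrow> (\<forall>a\<in>D (Base (Suc n)). ap f a = tt))"

definition satisfiable :: "'u itself \<Rightarrow> tm set \<Rightarrow> bool" where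
  "satisfiable _ A \<longleftrightarrow>
     (\<exists>D ap (I :: name \<Rightarrow> 'u) tt ff. logical D ap I tt ff \<and> (\<forall>s\<in>A. eval D ap I s = Some tt))"

definition normalization :: "'u itself \<Rightarrow> (tm \<Rightarrow> tm) \<Rightarrow> bool" where
  "normalization _ nf \<longleftrightarrow>
     (\<forall>s. is_term s \<longrightarrow> typeof (nf s) = typeof s) \<and>
     (\<forall>s. is_term s \<longrightarrow> nf (nf s) = nf s) \<and>
     (\<forall>s t. is_term (App s t) \<longrightarrow> nf (App (nf s) t) = nf (App s t)) \<and>
     (\<forall>y ss. is_term (apps (Nm y) ss) \<and> (\<exists>n. typeof (apps (Nm y) ss) = Some (Base n)) \<longrightarrow>
         nf (apps (Nm y) ss) = apps (Nm y) (map nf ss)) \<and>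
     (\<forall>D ap (I :: name \<Rightarrow> 'u) s. is_interp D ap I \<and> is_term s \<longrightarrow>
         eval D ap I (nf s) = eval D ap I s)"

definition EFO :: "tm \<Rightarrow> bool" where
  "EFO t \<longleftrightarrow> is_term t \<and>
     (\<forall>c\<in>names t. is_var c \<or> c = NegC \<or> c = ImpC \<or> (\<exists>\<alpha>. c = EqC \<alpha> \<and> is_sort \<alpha>) \<or> (\<exists>n. c = AllC n))"

definition quasi_EFO :: "tm \<Rightarrow> bool" where
  "quasi_EFO t \<longleftrightarrow> (EFO t \<and> typeof t = Some tyo) \<or>
     (\<exists>\<sigma> s u. t = neq \<sigma> s u \<and> EFO s \<and> EFO u \<and> typeof s = Some \<sigma> \<and> typeof u = Some \<sigma>)"

definition EFO_branch :: "(tm \<Rightarrow> tm) \<Rightarrow> tm set \<Rightarrow> bool" where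
  "EFO_branch nf A \<longleftrightarrow> (\<forall>s\<in>A. nf s = s \<and> quasi_EFO s)"

definition discriminating :: "ty \<Rightarrow> tm set \<Rightarrow> tm \<Rightarrow> bool" where
  "discriminating \<alpha> A u \<longleftrightarrow> (\<exists>t. neq \<alpha> u t \<in> A \<or> neq \<alpha> t u \<in> A)"

definition all_admissible :: "(tm \<Rightarrow> tm) \<Rightarrow> tm set \<Rightarrow> nat \<Rightarrow> tm \<Rightarrow> tm \<Rightarrow> bool" where
  "all_admissible nf A n s u \<longleftrightarrow>
     (let \<alpha> = Base (Suc n);
          disc = (\<exists>w. discriminating \<alpha> A w);
          inst = (\<exists>w. is_term w \<and> nf w = w \<and> typeof w = Some \<alpha> \<and> nf (App s w) \<in> A);
          fv = (\<exists>y. is_var y \<and> nty y = \<alpha> \<and> y \<in> free_set A)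
      in (disc \<longrightarrow> discriminating \<alpha> A u) \<and>
         (\<not> inst \<and> \<not> disc \<and> fv \<longrightarrow>
            (\<exists>y. u = Nm y \<and> is_var y \<and> nty y = \<alpha> \<and> y \<in> free_set A)) \<and>
         (\<not> inst \<and> \<not> disc \<and> \<not> fv \<longrightarrow> (\<exists>y. u = Nm y \<and> is_var y \<and> nty y = \<alpha>)))"

text \<open>rule_step nf A alts: A / (A \<union> B1) ... (A \<union> Bk) is an admitted rule instance,
  where alts = [B1, ..., Bk].\<close>
definition rule_step :: "(tm \<Rightarrow> tm) \<Rightarrow> tm set \<Rightarrow> tm set list \<Rightarrow> bool" where
  "rule_step nf A alts \<longleftrightarrow> finite A \<and> EFO_branch nf A \<and> (
     (\<exists>s. neg (neg s) \<in> A \<and> alts = [{s}])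
   \<or> (\<exists>s t. neq tyo s t \<in> A \<and> alts = [{s, neg t}, {neg s, t}])
   \<or> (\<exists>s t. imp s t \<in> A \<and> alts = [{neg s}, {t}])
   \<or> (\<exists>s t. neg (imp s t) \<in> A \<and> alts = [{s, neg t}])
   \<or> (\<exists>x ss ts. is_var x \<and> length ss = length ts \<and>
        apps (Nm x) ss \<in> A \<and> neg (apps (Nm x) ts) \<in> A \<and>
        alts = map (\<lambda>(s, t). {neq (tyof s) s t}) (zip ss ts))
   \<or> (\<exists>x ss ts \<alpha>. is_var x \<and> is_sort \<alpha> \<and> length ss = length ts \<and>
        neq \<alpha> (apps (Nm x) ss) (apps (Nm x) ts) \<in> A \<and>
        alts = map (\<lambda>(s, t). {neq (tyof s) s t}) (zip ss ts))
   \<or> (\<exists>s t \<sigma> \<tau> x. neq (Fn \<sigma> \<tau>) s t \<in> A \<and> is_var x \<and> nty x = \<sigma> \<and> x \<notin> free_set A \<and>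
        \<not> (\<exists>y. is_var y \<and> nty y = \<sigma> \<and> neq \<tau> (nf (App s (Nm y))) (nf (App t (Nm y))) \<in> A) \<and>
        alts = [{neq \<tau> (nf (App s (Nm x))) (nf (App t (Nm x)))}])
   \<or> (\<exists>s t u v \<alpha>. is_sort \<alpha> \<and> eq \<alpha> s t \<in> A \<and> neq \<alpha> u v \<in> A \<and>
        alts = [{neq \<alpha> s u, neq \<alpha> t u}, {neq \<alpha> s v, neq \<alpha> t v}])
   \<or> (\<exists>n s u. all n s \<in> A \<and> is_term u \<and> nf u = u \<and> EFO u \<and> typeof u = Some (Base (Suc n)) \<and>
        all_admissible nf A n s u \<and> alts = [{nf (App s u)}])
   \<or> (\<exists>n s x. neg (all n s) \<in> A \<and> is_var x \<and> nty x = Base (Suc n) \<and> x \<notin> free_set A \<and>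
        \<not> (\<exists>y. is_var y \<and> nty y = Base (Suc n) \<and> neg (nf (App s (Nm y))) \<in> A) \<and>
        alts = [{neg (nf (App s (Nm x)))}]))"

inductive refutable :: "(tm \<Rightarrow> tm) \<Rightarrow> tm set \<Rightarrow> bool" for nf where
  "rule_step nf A alts \<Longrightarrow> (\<forall>B. B \<in> set alts \<longrightarrow> refutable nf (A \<union> B)) \<Longrightarrow> refutable nf A"

end

theory Submission
  imports Defs
begin

lemma typeof_App_Some:
  "typeof (App h s) = Some \<tau> \<longleftrightarrow> (\<exists>\<sigma>. typeof h = Some (Fn \<sigma> \<tau>) \<and> typeof s = Some \<sigma>)"
  by (auto split: option.splits ty.splits if_splits)

lemma typeof_App_None:
  "typeof (App h s) \<noteq> None \<longleftrightarrow> (\<exists>\<sigma> \<tau>. typeof h = Some (Fn \<sigma> \<tau>) \<and> typeof s = Some \<sigma>)"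
  by (auto split: option.splits ty.splits if_splits)

lemma apps_Cons: "apps h (s # ss) = apps (App h s) ss"
  by (simp add: apps_def)

lemma apps_head_typed: "typeof (apps h ss) \<noteq> None \<Longrightarrow> typeof h \<noteq> None"
proof (induction ss arbitrary: h)
  case Nil then show ?case by (simp add: apps_def)
next
  case (Cons s ss)
  then have "typeof (App h s) \<noteq> None" by (metis apps_Cons)
  then show ?case using typeof_App_None by blast
qed

lemma apps_typ:
  "typeof (apps h ss) \<noteq> None \<Longrightarrow> typeof (apps h' ts) \<noteq> None \<Longrightarrow> typeof h = typeof h' \<Longrightarrow>
   length ss = length ts \<Longrightarrow> i < length ss \<Longrightarrow>
   typeof (ss!i) \<noteq> None \<and> typeof (ss!i) = typeof (ts!i)"
proof (induction ss arbitrary: h h' ts i)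
  case Nil then show ?case by simp
next
  case (Cons s ss)
  then obtain t ts' where ts: "ts = t # ts'" by (cases ts) auto
  have a: "typeof (App h s) \<noteq> None" using Cons.prems(1) apps_head_typed by (metis apps_Cons)
  have b: "typeof (App h' t) \<noteq> None" using Cons.prems(2) apps_head_typed by (metis apps_Cons ts)
  from a obtain \<sigma> \<tau> where h: "typeof h = Some (Fn \<sigma> \<tau>)" "typeof s = Some \<sigma>" using typeof_App_None by blast
  from b obtain \<sigma>' \<tau>' where h': "typeof h' = Some (Fn \<sigma>' \<tau>')" "typeof t = Some \<sigma>'" using typeof_App_None by blast
  have eq: "\<sigma>' = \<sigma>" "\<tau>' = \<tau>" using h h' Cons.prems(3) by auto
  have "typeof (App h s) = typeof (App h' t)" using h h' eq by simp
  show ?case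
  proof (cases i)
    case 0 then show ?thesis using h h' eq ts by simp
  next
    case (Suc j)
    have "typeof (ss!j) \<noteq> None \<and> typeof (ss!j) = typeof (ts'!j)"
      apply (rule Cons.IH[of "App h s" "App h' t"])
      using Cons.prems ts Suc \<open>typeof (App h s) = typeof (App h' t)\<close> by (auto simp: apps_Cons)
    then show ?thesis using Suc ts by (metis nth_Cons_Suc)
  qed
qed

lemma apps_eval_cong:
  "eval D ap I h = eval D ap I h' \<Longrightarrow> length ss = length ts \<Longrightarrow>
   (\<forall>i<length ss. eval D ap I (ss!i) = eval D ap I (ts!i)) \<Longrightarrow>
   eval D ap I (apps h ss) = eval D ap I (apps h' ts)"
proof (induction ss arbitrary: h h' ts)
  case Nil then show ?case by (simp add: apps_def)
next
  case (Cons s ss)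
  then obtain t ts' where ts: "ts = t # ts'" by (cases ts) auto
  have "eval D ap I (App h s) = eval D ap I (App h' t)"
  proof -
    have e0: "eval D ap I s = eval D ap I t" using Cons.prems(3)[rule_format, of 0] ts by simp
    show ?thesis by (simp add: Cons.prems(1) e0)
  qed
  moreover have "\<forall>i<length ss. eval D ap I (ss!i) = eval D ap I (ts'!i)"
    using Cons.prems(3) ts by (metis Suc_less_eq length_Cons nth_Cons_Suc)
  ultimately show ?case using Cons.IH[of "App h s" "App h' t" ts'] Cons.prems ts
    by (auto simp: apps_Cons)
qed

lemma typ_D:
  assumes "assignment D ap I"
  shows "typeof t = Some \<sigma> \<Longrightarrow> eval D ap I t = Some v \<Longrightarrow> v \<in> D \<sigma>"
proof (induction t arbitrary: \<sigma> v)
  case (Nm x) then show ?case using assms by (auto simp: assignment_def)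
next
  case (App s t)
  then obtain \<rho> where st: "typeof s = Some (Fn \<rho> \<sigma>)" "typeof t = Some \<rho>" using typeof_App_Some by blast
  from App.prems obtain f a where fa: "eval D ap I s = Some f" "eval D ap I t = Some a" "v = ap f a"
    by (cases "eval D ap I s"; cases "eval D ap I t") auto
  have "f \<in> D (Fn \<rho> \<sigma>)" "a \<in> D \<rho>" using App.IH st fa by auto
  then show ?case using assms fa unfolding assignment_def frame_def by blast
next
  case (Lam x s)
  let ?T = "tyof (Lam x s)"
  let ?P = "\<lambda>f. f \<in> D ?T \<and> (\<forall>a\<in>D (nty x). eval D ap (I(x := a)) s = Some (ap f a))"
  let ?C = "typeof (Lam x s) \<noteq> None \<and> (\<exists>f\<in>D ?T. \<forall>a\<in>D (nty x). eval D ap (I(x := a)) s = Some (ap f a))"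
  have e: "eval D ap I (Lam x s) = (if ?C then Some (THE f. ?P f) else None)" by (rule eval.simps(3))
  have C: ?C
  proof (rule ccontr)
    assume nC: "\<not> ?C"
    have "eval D ap I (Lam x s) = None" unfolding e by (rule if_not_P[OF nC])
    with Lam.prems(2) show False by (simp del: eval.simps)
  qed
  have "eval D ap I (Lam x s) = Some (THE f. ?P f)" unfolding e by (rule if_P[OF C])
  with Lam.prems(2)[symmetric] have "Some v = Some (THE f. ?P f)" by (rule trans)
  then have v: "v = (THE f. ?P f)" by (simp only: option.inject)
  from C obtain f where f: "?P f" by blast
  have T: "?T = \<sigma>" using Lam.prems(1) by (auto simp: tyof_def)
  obtain \<tau> where "typeof s = Some \<tau>" and T2: "\<sigma> = Fn (nty x) \<tau>" using Lam.prems(1) by auto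
  have fr: "\<forall>f\<in>D (Fn (nty x) \<tau>). \<forall>g\<in>D (Fn (nty x) \<tau>). (\<forall>a\<in>D (nty x). ap f a = ap g a) \<longrightarrow> f = g"
    using assms unfolding assignment_def frame_def by blast
  have uniq: "g = f" if g: "?P g" for g
  proof -
    have "\<forall>a\<in>D (nty x). ap g a = ap f a"
    proof
      fix a assume a: "a \<in> D (nty x)"
      have "eval D ap (I(x := a)) s = Some (ap g a)" using g a by blast
      moreover have "eval D ap (I(x := a)) s = Some (ap f a)" using f a by blast
      ultimately show "ap g a = ap f a" by simp
    qed
    moreover have "g \<in> D (Fn (nty x) \<tau>)" "f \<in> D (Fn (nty x) \<tau>)" using g f T T2 by auto
    ultimately show ?thesis using fr by blast
  qed
  have "?P (THE f. ?P f)" by (rule theI[of ?P f, OF f]) (rule uniq)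
  then have "(THE f. ?P f) \<in> D ?T" by blast
  then show ?case unfolding v T .
qed

lemma coincide:
  "(\<forall>y\<in>free t. I y = J y) \<Longrightarrow> eval D ap I t = eval D ap J t"
proof (induction t arbitrary: I J)
  case (Nm x) then show ?case by simp
next
  case (App s t)
  have "eval D ap I s = eval D ap J s" "eval D ap I t = eval D ap J t" using App by auto
  then show ?case by simp
next
  case (Lam x s)
  have "\<forall>a. eval D ap (I(x := a)) s = eval D ap (J(x := a)) s"
    using Lam by (intro allI Lam.IH) auto
  then show ?case by simp
qed

lemma interp_upd:
  assumes "is_interp D ap I" "a \<in> D (nty x)"
  shows "is_interp D ap (I(x := a))"
  unfolding is_interp_def
proof (intro conjI allI impI)
  show "assignment D ap (I(x := a))" using assms by (auto simp: is_interp_def assignment_def)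
next
  fix t assume "is_term t"
  then have "is_term (Lam x t)" by (auto simp: is_term_def)
  then have "eval D ap I (Lam x t) \<noteq> None" using assms unfolding is_interp_def by blast
  then have "\<exists>f\<in>D (tyof (Lam x t)). \<forall>b\<in>D (nty x). eval D ap (I(x := b)) t = Some (ap f b)"
    by (simp only: eval.simps(3) split: if_splits) auto
  then show "eval D ap (I(x := a)) t \<noteq> None" using assms(2) by (auto split: if_splits)
qed

lemma logical_upd:
  assumes "logical D ap I tt ff" "a \<in> D (nty x)" "is_var x"
  shows "logical D ap (I(x := a)) tt ff"
proof -
  obtain n \<sigma> where x: "x = Var n \<sigma>" using assms(3) by (cases x) auto
  have "is_interp D ap (I(x := a))" using assms interp_upd by (auto simp: logical_def)
  then show ?thesis using assms(1) x unfolding logical_def by auto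
qed

lemma val:
  assumes "logical D ap I tt ff" "typeof s = Some \<sigma>"
  shows "\<exists>v. eval D ap I s = Some v \<and> v \<in> D \<sigma>"
proof -
  have "eval D ap I s \<noteq> None" using assms by (auto simp: logical_def is_interp_def is_term_def)
  then obtain v where "eval D ap I s = Some v" by auto
  moreover have "v \<in> D \<sigma>" using typ_D[OF _ assms(2) calculation] assms(1)
    by (auto simp: logical_def is_interp_def)
  ultimately show ?thesis by blast
qed

lemma val_o:
  assumes "logical D ap I tt ff" "typeof s = Some tyo"
  shows "eval D ap I s = Some tt \<or> eval D ap I s = Some ff"
  using val[OF assms] assms(1) by (auto simp: logical_def)

lemma eval_neg:
  assumes "logical D ap I tt ff" "typeof s = Some tyo"
  shows "eval D ap I (neg s) = Some (if eval D ap I s = Some tt then ff else tt)"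
  using val[OF assms] assms(1) by (auto simp: logical_def neg_def)

lemma eval_eq:
  assumes "logical D ap I tt ff" "typeof s = Some \<sigma>" "typeof t = Some \<sigma>"
  shows "eval D ap I (eq \<sigma> s t) = Some (if eval D ap I s = eval D ap I t then tt else ff)"
  using val[OF assms(1,2)] val[OF assms(1,3)] assms(1) by (auto simp: logical_def eq_def)

lemma typeof_eq: "typeof s = Some \<sigma> \<Longrightarrow> typeof t = Some \<sigma> \<Longrightarrow> typeof (eq \<sigma> s t) = Some tyo"
  by (simp add: eq_def)

lemma eval_neq:
  assumes "logical D ap I tt ff" "typeof s = Some \<sigma>" "typeof t = Some \<sigma>"
  shows "eval D ap I (neq \<sigma> s t) = Some (if eval D ap I s = eval D ap I t then ff else tt)"
  unfolding neq_def using eval_neg[OF assms(1) typeof_eq[OF assms(2,3)]] eval_eq[OF assms]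
  by simp

lemma eval_imp:
  assumes "logical D ap I tt ff" "typeof s = Some tyo" "typeof t = Some tyo"
  shows "eval D ap I (imp s t) = Some (if eval D ap I s = Some tt \<and> eval D ap I t = Some ff then ff else tt)"
  using val[OF assms(1,2)] val[OF assms(1,3)] assms(1) by (auto simp: logical_def imp_def)

lemma eval_all:
  assumes "logical D ap I tt ff" "typeof s = Some (Fn (Base (Suc n)) tyo)" "eval D ap I s = Some f"
  shows "eval D ap I (all n s) = Some tt \<longleftrightarrow> (\<forall>a\<in>D (Base (Suc n)). ap f a = tt)"
proof -
  have "f \<in> D (Fn (Base (Suc n)) tyo)" using val[OF assms(1,2)] assms(3) by auto
  then show ?thesis using assms by (auto simp: logical_def all_def)
qed

lemma typeof_neg: "typeof (neg s) = Some tyo \<Longrightarrow> typeof s = Some tyo"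
  by (simp only: neg_def typeof_App_Some) auto
lemma typeof_neq: "typeof (neq \<sigma> s t) = Some tyo \<Longrightarrow> typeof s = Some \<sigma> \<and> typeof t = Some \<sigma>"
  by (simp only: neq_def neg_def eq_def typeof_App_Some) auto
lemma typeof_eq': "typeof (eq \<sigma> s t) = Some tyo \<Longrightarrow> typeof s = Some \<sigma> \<and> typeof t = Some \<sigma>"
  by (simp only: eq_def typeof_App_Some) auto
lemma typeof_imp: "typeof (imp s t) = Some tyo \<Longrightarrow> typeof s = Some tyo \<and> typeof t = Some tyo"
  by (simp only: imp_def typeof_App_Some) auto
lemma typeof_all: "typeof (all n s) = Some tyo \<Longrightarrow> typeof s = Some (Fn (Base (Suc n)) tyo)"
  by (simp only: all_def typeof_App_Some) auto

lemma quasi_typ: "quasi_EFO t \<Longrightarrow> typeof t = Some tyo"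
  by (auto simp: quasi_EFO_def neq_def neg_def eq_def)


lemma nf_eval:
  assumes "normalization TYPE('u) nf" "is_interp D ap (I::name \<Rightarrow> 'u)" "is_term s"
  shows "eval D ap I (nf s) = eval D ap I s"
  using assms unfolding normalization_def by blast

lemma nf_typ:
  assumes "normalization TYPE('u) nf" "is_term s"
  shows "typeof (nf s) = typeof s"
  using assms unfolding normalization_def by blast

lemma free_sub: "s \<in> A \<Longrightarrow> free s \<subseteq> free_set A"
  by (auto simp: free_set_def)

lemma fresh_upd:
  assumes "x \<notin> free_set A" "\<forall>s\<in>A. eval D ap I s = Some tt"
  shows "\<forall>s\<in>A. eval D ap (I(x := a)) s = Some tt"
proof
  fix s assume s: "s \<in> A"
  have "x \<notin> free s" using free_sub[OF s] assms(1) by blast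
  then have "eval D ap (I(x := a)) s = eval D ap I s" by (intro coincide) auto
  then show "eval D ap (I(x := a)) s = Some tt" using assms(2) s by simp
qed

lemma free_neq: "free s \<subseteq> free (neq \<sigma> s t)" "free t \<subseteq> free (neq \<sigma> s t)"
  by (auto simp: neq_def neg_def eq_def)

lemma free_negall: "free s \<subseteq> free (neg (all n s))"
  by (auto simp: neg_def all_def)

lemma exists_diff:
  assumes L: "logical D ap I tt ff" and ty1: "typeof (apps (Nm x) ss) \<noteq> None"
    and ty2: "typeof (apps (Nm x) ts) \<noteq> None" and len: "length ss = length ts"
    and d: "eval D ap I (apps (Nm x) ss) \<noteq> eval D ap I (apps (Nm x) ts)"
  shows "\<exists>B\<in>set (map (\<lambda>(s, t). {neq (tyof s) s t}) (zip ss ts)). \<forall>u\<in>B. eval D ap I u = Some tt"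
proof -
  obtain i where i: "i < length ss" "eval D ap I (ss!i) \<noteq> eval D ap I (ts!i)"
    using apps_eval_cong[of D ap I "Nm x" "Nm x" ss ts] len d by blast
  have ty: "typeof (ss!i) \<noteq> None \<and> typeof (ss!i) = typeof (ts!i)"
    using apps_typ[OF ty1 ty2 refl len i(1)] .
  then obtain \<sigma> where \<sigma>: "typeof (ss!i) = Some \<sigma>" "typeof (ts!i) = Some \<sigma>" using ty by (cases "typeof (ss!i)") auto
  have tyof: "tyof (ss!i) = \<sigma>" using \<sigma> by (simp add: tyof_def)
  have mem: "(ss!i, ts!i) \<in> set (zip ss ts)" using i(1) len by (metis in_set_zip fst_conv snd_conv)
  have "{neq (tyof (ss!i)) (ss!i) (ts!i)} \<in> set (map (\<lambda>(s, t). {neq (tyof s) s t}) (zip ss ts))"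
    using mem by force
  moreover have "eval D ap I (neq (tyof (ss!i)) (ss!i) (ts!i)) = Some tt"
    unfolding tyof using eval_neq[OF L \<sigma>] i(2) by simp
  ultimately show ?thesis by blast
qed


definition good :: "(ty \<Rightarrow> 'u set) \<Rightarrow> ('u \<Rightarrow> 'u \<Rightarrow> 'u) \<Rightarrow> 'u \<Rightarrow> 'u \<Rightarrow> tm set \<Rightarrow> tm set list \<Rightarrow> bool" where
  "good D ap tt ff A alts \<longleftrightarrow> (\<exists>B\<in>set alts. \<exists>I'. logical D ap I' tt ff \<and> (\<forall>s\<in>A \<union> B. eval D ap I' s = Some tt))"

lemma goodI:
  "B \<in> set alts \<Longrightarrow> logical D ap I' tt ff \<Longrightarrow> \<forall>s\<in>A. eval D ap I' s = Some tt \<Longrightarrow>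
   \<forall>s\<in>B. eval D ap I' s = Some tt \<Longrightarrow> good D ap tt ff A alts"
  unfolding good_def by blast

lemma tt_ff: "logical D ap I tt ff \<Longrightarrow> tt \<noteq> ff"
  by (simp add: logical_def)

locale ctx =
  fixes D ap and I :: "name \<Rightarrow> 'u" and tt ff A
  assumes L: "logical D ap I tt ff"
    and S: "\<forall>s\<in>A. eval D ap I s = Some tt"
    and TA: "\<forall>s\<in>A. typeof s = Some tyo"
begin

lemma ev: "s \<in> A \<Longrightarrow> eval D ap I s = Some tt" using S by blast
lemma ty: "s \<in> A \<Longrightarrow> typeof s = Some tyo" using TA by blast
lemma ne: "tt \<noteq> ff" using tt_ff[OF L] .

lemma neg_true: "typeof s = Some tyo \<Longrightarrow> eval D ap I (neg s) = Some tt \<longleftrightarrow> eval D ap I s = Some ff"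
  using eval_neg[OF L, of s] val_o[OF L, of s] ne by auto

lemma c1: "neg (neg s) \<in> A \<Longrightarrow> good D ap tt ff A [{s}]"
proof -
  assume m: "neg (neg s) \<in> A"
  have t1: "typeof (neg s) = Some tyo" using typeof_neg ty[OF m] by blast
  have t0: "typeof s = Some tyo" using typeof_neg t1 by blast
  have "eval D ap I (neg s) = Some ff" using neg_true[OF t1] ev[OF m] by simp
  then have "eval D ap I s = Some tt" using eval_neg[OF L t0] ne by (auto split: if_splits)
  then show ?thesis using S by (intro goodI[where I'=I and B="{s}"] L) auto
qed

lemma c2: "neq tyo s t \<in> A \<Longrightarrow> good D ap tt ff A [{s, neg t}, {neg s, t}]"
proof -
  assume m: "neq tyo s t \<in> A"
  have t: "typeof s = Some tyo" "typeof t = Some tyo" using typeof_neq ty[OF m] by blast+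
  have d: "eval D ap I s \<noteq> eval D ap I t" using eval_neq[OF L t] ev[OF m] ne by (auto split: if_splits)
  show ?thesis
  proof (cases "eval D ap I s = Some tt")
    case True
    then have "eval D ap I t = Some ff" using d val_o[OF L t(2)] by auto
    then show ?thesis using S True neg_true[OF t(2)] by (intro goodI[where I'=I and B="{s, neg t}"] L) auto
  next
    case False
    then have "eval D ap I s = Some ff" "eval D ap I t = Some tt" using d val_o[OF L t(1)] val_o[OF L t(2)] by auto
    then show ?thesis using S neg_true[OF t(1)] by (intro goodI[where I'=I and B="{neg s, t}"] L) auto
  qed
qed

lemma c3: "imp s t \<in> A \<Longrightarrow> good D ap tt ff A [{neg s}, {t}]"
proof -
  assume m: "imp s t \<in> A"
  have t: "typeof s = Some tyo" "typeof t = Some tyo" using typeof_imp ty[OF m] by blast+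
  have e: "eval D ap I s \<noteq> Some tt \<or> eval D ap I t = Some tt"
    using eval_imp[OF L t] ev[OF m] ne val_o[OF L t(2)] by (auto split: if_splits)
  show ?thesis
  proof (cases "eval D ap I t = Some tt")
    case True
    then show ?thesis using S by (intro goodI[where I'=I and B="{t}"] L) auto
  next
    case False
    then have "eval D ap I s = Some ff" using e val_o[OF L t(1)] by auto
    then show ?thesis using S neg_true[OF t(1)] by (intro goodI[where I'=I and B="{neg s}"] L) auto
  qed
qed

lemma c4: "neg (imp s t) \<in> A \<Longrightarrow> good D ap tt ff A [{s, neg t}]"
proof -
  assume m: "neg (imp s t) \<in> A"
  have t1: "typeof (imp s t) = Some tyo" using typeof_neg ty[OF m] by blast
  have t: "typeof s = Some tyo" "typeof t = Some tyo" using typeof_imp t1 by blast+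
  have "eval D ap I (imp s t) = Some ff" using neg_true[OF t1] ev[OF m] by simp
  then have "eval D ap I s = Some tt" "eval D ap I t = Some ff" using eval_imp[OF L t] ne by (auto split: if_splits)
  then show ?thesis using S neg_true[OF t(2)] by (intro goodI[where I'=I and B="{s, neg t}"] L) auto
qed

lemma c5: "apps (Nm x) ss \<in> A \<Longrightarrow> neg (apps (Nm x) ts) \<in> A \<Longrightarrow> length ss = length ts \<Longrightarrow>
  good D ap tt ff A (map (\<lambda>(s, t). {neq (tyof s) s t}) (zip ss ts))"
proof -
  assume m1: "apps (Nm x) ss \<in> A" and m2: "neg (apps (Nm x) ts) \<in> A" and len: "length ss = length ts"
  have t1: "typeof (apps (Nm x) ss) = Some tyo" using ty[OF m1] .
  have t2: "typeof (apps (Nm x) ts) = Some tyo" using typeof_neg ty[OF m2] by blast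
  have "eval D ap I (apps (Nm x) ts) = Some ff" using neg_true[OF t2] ev[OF m2] by simp
  then have d: "eval D ap I (apps (Nm x) ss) \<noteq> eval D ap I (apps (Nm x) ts)" using ev[OF m1] ne by simp
  obtain B where "B \<in> set (map (\<lambda>(s, t). {neq (tyof s) s t}) (zip ss ts))" "\<forall>u\<in>B. eval D ap I u = Some tt"
    using exists_diff[OF L _ _ len d] t1 t2 by auto
  then show ?thesis using S by (intro goodI[where I'=I, OF _ L]) blast+
qed

lemma c6: "neq \<alpha> (apps (Nm x) ss) (apps (Nm x) ts) \<in> A \<Longrightarrow> length ss = length ts \<Longrightarrow>
  good D ap tt ff A (map (\<lambda>(s, t). {neq (tyof s) s t}) (zip ss ts))"
proof -
  assume m: "neq \<alpha> (apps (Nm x) ss) (apps (Nm x) ts) \<in> A" and len: "length ss = length ts"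
  have t: "typeof (apps (Nm x) ss) = Some \<alpha>" "typeof (apps (Nm x) ts) = Some \<alpha>" using typeof_neq ty[OF m] by blast+
  have d: "eval D ap I (apps (Nm x) ss) \<noteq> eval D ap I (apps (Nm x) ts)"
    using eval_neq[OF L t] ev[OF m] ne by (auto split: if_splits)
  obtain B where "B \<in> set (map (\<lambda>(s, t). {neq (tyof s) s t}) (zip ss ts))" "\<forall>u\<in>B. eval D ap I u = Some tt"
    using exists_diff[OF L _ _ len d] t by auto
  then show ?thesis using S by (intro goodI[where I'=I, OF _ L]) blast+
qed

lemma c8: "eq \<alpha> s t \<in> A \<Longrightarrow> neq \<alpha> u v \<in> A \<Longrightarrow>
  good D ap tt ff A [{neq \<alpha> s u, neq \<alpha> t u}, {neq \<alpha> s v, neq \<alpha> t v}]"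
proof -
  assume m1: "eq \<alpha> s t \<in> A" and m2: "neq \<alpha> u v \<in> A"
  have t1: "typeof s = Some \<alpha>" "typeof t = Some \<alpha>" using typeof_eq' ty[OF m1] by blast+
  have t2: "typeof u = Some \<alpha>" "typeof v = Some \<alpha>" using typeof_neq ty[OF m2] by blast+
  have st: "eval D ap I s = eval D ap I t" using eval_eq[OF L t1] ev[OF m1] ne by (auto split: if_splits)
  have uv: "eval D ap I u \<noteq> eval D ap I v" using eval_neq[OF L t2] ev[OF m2] ne by (auto split: if_splits)
  show ?thesis
  proof (cases "eval D ap I s = eval D ap I u")
    case False
    then show ?thesis using S st eval_neq[OF L t1(1) t2(1)] eval_neq[OF L t1(2) t2(1)]
      by (intro goodI[where I'=I and B="{neq \<alpha> s u, neq \<alpha> t u}"] L) auto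
  next
    case True
    then show ?thesis using S st uv eval_neq[OF L t1(1) t2(2)] eval_neq[OF L t1(2) t2(2)]
      by (intro goodI[where I'=I and B="{neq \<alpha> s v, neq \<alpha> t v}"] L) auto
  qed
qed


lemma frame_of: "frame D ap"
  using L by (simp add: logical_def is_interp_def assignment_def)

lemma interp_of: "is_interp D ap I"
  using L by (simp add: logical_def)

lemma c7:
  assumes N: "normalization TYPE('u) nf"
    and m: "neq (Fn \<sigma> \<tau>) s t \<in> A" and x: "is_var x" "nty x = \<sigma>" "x \<notin> free_set A"
  shows "good D ap tt ff A [{neq \<tau> (nf (App s (Nm x))) (nf (App t (Nm x)))}]"
proof -
  have t: "typeof s = Some (Fn \<sigma> \<tau>)" "typeof t = Some (Fn \<sigma> \<tau>)" using typeof_neq ty[OF m] by blast+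
  obtain f where f: "eval D ap I s = Some f" "f \<in> D (Fn \<sigma> \<tau>)" using val[OF L t(1)] by blast
  obtain g where g: "eval D ap I t = Some g" "g \<in> D (Fn \<sigma> \<tau>)" using val[OF L t(2)] by blast
  have "f \<noteq> g" using eval_neq[OF L t] ev[OF m] ne f g by (auto split: if_splits)
  then obtain a where a: "a \<in> D \<sigma>" "ap f a \<noteq> ap g a"
    using frame_of f g unfolding frame_def by blast
  let ?I = "I(x := a)"
  have L': "logical D ap ?I tt ff" using logical_upd[OF L _ x(1)] a x by simp
  have S': "\<forall>s\<in>A. eval D ap ?I s = Some tt" using fresh_upd[OF x(3) S] .
  have xs: "x \<notin> free s" "x \<notin> free t" using free_sub[OF m] free_neq x(3) by blast+
  have fs: "eval D ap ?I s = Some f" using f coincide[of s ?I I] xs by auto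
  have gs: "eval D ap ?I t = Some g" using g coincide[of t ?I I] xs by auto
  have ta: "typeof (App s (Nm x)) = Some \<tau>" "typeof (App t (Nm x)) = Some \<tau>"
    using t x(2) typeof_App_Some by auto
  have it: "is_term (App s (Nm x))" "is_term (App t (Nm x))" using ta by (auto simp: is_term_def)
  have II: "is_interp D ap ?I" using L' by (simp add: logical_def)
  have e1: "eval D ap ?I (nf (App s (Nm x))) = Some (ap f a)" using nf_eval[OF N II it(1)] fs by simp
  have e2: "eval D ap ?I (nf (App t (Nm x))) = Some (ap g a)" using nf_eval[OF N II it(2)] gs by simp
  have tn: "typeof (nf (App s (Nm x))) = Some \<tau>" "typeof (nf (App t (Nm x))) = Some \<tau>"
    using nf_typ[OF N it(1)] nf_typ[OF N it(2)] ta by simp_all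
  have "eval D ap ?I (neq \<tau> (nf (App s (Nm x))) (nf (App t (Nm x)))) = Some tt"
    using eval_neq[OF L' tn] e1 e2 a(2) by simp
  then show ?thesis using S' by (intro goodI[where I'="?I" and B="{neq \<tau> (nf (App s (Nm x))) (nf (App t (Nm x)))}"] L') auto
qed

lemma c9:
  assumes N: "normalization TYPE('u) nf"
    and m: "all n s \<in> A" and u: "typeof u = Some (Base (Suc n))"
  shows "good D ap tt ff A [{nf (App s u)}]"
proof -
  have t: "typeof s = Some (Fn (Base (Suc n)) tyo)" using typeof_all ty[OF m] by blast
  obtain f where f: "eval D ap I s = Some f" using val[OF L t] by blast
  obtain b where b: "eval D ap I u = Some b" "b \<in> D (Base (Suc n))" using val[OF L u] by blast
  have "ap f b = tt" using eval_all[OF L t f] ev[OF m] b by blast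
  moreover have it: "is_term (App s u)" using t u typeof_App_Some by (auto simp: is_term_def)
  ultimately have "eval D ap I (nf (App s u)) = Some tt" using nf_eval[OF N interp_of it] f b by simp
  then show ?thesis using S by (intro goodI[where I'=I and B="{nf (App s u)}"] L) auto
qed

lemma c10:
  assumes N: "normalization TYPE('u) nf"
    and m: "neg (all n s) \<in> A" and x: "is_var x" "nty x = Base (Suc n)" "x \<notin> free_set A"
  shows "good D ap tt ff A [{neg (nf (App s (Nm x)))}]"
proof -
  have t1: "typeof (all n s) = Some tyo" using typeof_neg ty[OF m] by blast
  have t: "typeof s = Some (Fn (Base (Suc n)) tyo)" using typeof_all t1 by blast
  obtain f where f: "eval D ap I s = Some f" "f \<in> D (Fn (Base (Suc n)) tyo)" using val[OF L t] by blast
  have "eval D ap I (all n s) = Some ff" using neg_true[OF t1] ev[OF m] by simp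
  then have "\<not> (\<forall>a\<in>D (Base (Suc n)). ap f a = tt)" using eval_all[OF L t f(1)] ne by simp
  then obtain a where a: "a \<in> D (Base (Suc n))" "ap f a \<noteq> tt" by blast
  have "ap f a \<in> D tyo" using frame_of f(2) a(1) unfolding frame_def by blast
  then have fa: "ap f a = ff" using a(2) L by (auto simp: logical_def)
  let ?I = "I(x := a)"
  have L': "logical D ap ?I tt ff" using logical_upd[OF L _ x(1)] a x by simp
  have S': "\<forall>s\<in>A. eval D ap ?I s = Some tt" using fresh_upd[OF x(3) S] .
  have xs: "x \<notin> free s" using free_sub[OF m] free_negall[of s n] x(3) by blast
  have fs: "eval D ap ?I s = Some f" using f coincide[of s ?I I] xs by auto
  have ta: "typeof (App s (Nm x)) = Some tyo" using t x(2) typeof_App_Some by auto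
  have it: "is_term (App s (Nm x))" using ta by (auto simp: is_term_def)
  have II: "is_interp D ap ?I" using L' by (simp add: logical_def)
  have e1: "eval D ap ?I (nf (App s (Nm x))) = Some ff" using nf_eval[OF N II it] fs fa by simp
  have tn: "typeof (nf (App s (Nm x))) = Some tyo" using nf_typ[OF N it] ta by simp
  have "eval D ap ?I (neg (nf (App s (Nm x)))) = Some tt" using eval_neg[OF L' tn] e1 ne by simp
  then show ?thesis using S' by (intro goodI[where I'="?I" and B="{neg (nf (App s (Nm x)))}"] L') auto
qed

end

lemma step_sound:
  assumes N: "normalization TYPE('u) nf" and R: "rule_step nf A alts"
    and L: "logical D ap (I :: name \<Rightarrow> 'u) tt ff" and S: "\<forall>s\<in>A. eval D ap I s = Some tt"
  shows "good D ap tt ff A alts"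
proof -
  have TA: "\<forall>s\<in>A. typeof s = Some tyo"
    using R quasi_typ unfolding rule_step_def EFO_branch_def by blast
  interpret ctx D ap I tt ff A using L S TA by unfold_locales
  from R have "(\<exists>s. neg (neg s) \<in> A \<and> alts = [{s}])
   \<or> (\<exists>s t. neq tyo s t \<in> A \<and> alts = [{s, neg t}, {neg s, t}])
   \<or> (\<exists>s t. imp s t \<in> A \<and> alts = [{neg s}, {t}])
   \<or> (\<exists>s t. neg (imp s t) \<in> A \<and> alts = [{s, neg t}])
   \<or> (\<exists>x ss ts. is_var x \<and> length ss = length ts \<and>
        apps (Nm x) ss \<in> A \<and> neg (apps (Nm x) ts) \<in> A \<and>
        alts = map (\<lambda>(s, t). {neq (tyof s) s t}) (zip ss ts))
   \<or> (\<exists>x ss ts \<alpha>. is_var x \<and> is_sort \<alpha> \<and> length ss = length ts \<and>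
        neq \<alpha> (apps (Nm x) ss) (apps (Nm x) ts) \<in> A \<and>
        alts = map (\<lambda>(s, t). {neq (tyof s) s t}) (zip ss ts))
   \<or> (\<exists>s t \<sigma> \<tau> x. neq (Fn \<sigma> \<tau>) s t \<in> A \<and> is_var x \<and> nty x = \<sigma> \<and> x \<notin> free_set A \<and>
        alts = [{neq \<tau> (nf (App s (Nm x))) (nf (App t (Nm x)))}])
   \<or> (\<exists>s t u v \<alpha>. eq \<alpha> s t \<in> A \<and> neq \<alpha> u v \<in> A \<and>
        alts = [{neq \<alpha> s u, neq \<alpha> t u}, {neq \<alpha> s v, neq \<alpha> t v}])
   \<or> (\<exists>n s u. all n s \<in> A \<and> typeof u = Some (Base (Suc n)) \<and> alts = [{nf (App s u)}])
   \<or> (\<exists>n s x. neg (all n s) \<in> A \<and> is_var x \<and> nty x = Base (Suc n) \<and> x \<notin> free_set A \<and>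
        alts = [{neg (nf (App s (Nm x)))}])"
    unfolding rule_step_def by blast
  then show ?thesis
  proof (elim disjE exE conjE)
    show ?thesis if "neg (neg s) \<in> A" "alts = [{s}]" for s using c1 that by simp
    show ?thesis if "neq tyo s t \<in> A" "alts = [{s, neg t}, {neg s, t}]" for s t using c2 that by simp
    show ?thesis if "imp s t \<in> A" "alts = [{neg s}, {t}]" for s t using c3 that by simp
    show ?thesis if "neg (imp s t) \<in> A" "alts = [{s, neg t}]" for s t using c4 that by simp
    show ?thesis if "apps (Nm x) ss \<in> A" "neg (apps (Nm x) ts) \<in> A" "length ss = length ts"
      "alts = map (\<lambda>(s, t). {neq (tyof s) s t}) (zip ss ts)" for x ss ts using c5 that by simp
    show ?thesis if "neq \<alpha> (apps (Nm x) ss) (apps (Nm x) ts) \<in> A" "length ss = length ts"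
      "alts = map (\<lambda>(s, t). {neq (tyof s) s t}) (zip ss ts)" for x ss ts \<alpha> using c6 that by simp
    show ?thesis if "neq (Fn \<sigma> \<tau>) s t \<in> A" "is_var x" "nty x = \<sigma>" "x \<notin> free_set A"
      "alts = [{neq \<tau> (nf (App s (Nm x))) (nf (App t (Nm x)))}]" for s t \<sigma> \<tau> x
      using c7[OF N that(1-4)] that(5) by simp
    show ?thesis if "eq \<alpha> s t \<in> A" "neq \<alpha> u v \<in> A"
      "alts = [{neq \<alpha> s u, neq \<alpha> t u}, {neq \<alpha> s v, neq \<alpha> t v}]" for s t u v \<alpha> using c8 that by simp
    show ?thesis if "all n s \<in> A" "typeof u = Some (Base (Suc n))" "alts = [{nf (App s u)}]" for n s u
      using c9[OF N that(1,2)] that(3) by simp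
    show ?thesis if "neg (all n s) \<in> A" "is_var x" "nty x = Base (Suc n)" "x \<notin> free_set A"
      "alts = [{neg (nf (App s (Nm x)))}]" for n s x
      using c10[OF N that(1-4)] that(5) by simp
  qed
qed

lemma main:
  assumes N: "normalization TYPE('u) nf"
  shows "refutable nf A \<Longrightarrow> \<forall>D ap (I :: name \<Rightarrow> 'u) tt ff. logical D ap I tt ff \<longrightarrow> \<not> (\<forall>s\<in>A. eval D ap I s = Some tt)"
proof (induction rule: refutable.induct)
  case (1 A alts)
  show ?case
  proof (intro allI impI notI)
    fix D ap and I :: "name \<Rightarrow> 'u" and tt ff
    assume L: "logical D ap I tt ff" and S: "\<forall>s\<in>A. eval D ap I s = Some tt"
    have "good D ap tt ff A alts" using step_sound[OF N 1(1) L S] .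
    then obtain B I' where "B \<in> set alts" "logical D ap I' tt ff" "\<forall>s\<in>A \<union> B. eval D ap I' s = Some tt"
      unfolding good_def by blast
    then show False using 1(2) by blast
  qed
qed

theorem proposition14p1:
  fixes nf :: "tm \<Rightarrow> tm" and A :: "tm set"
  assumes "normalization TYPE('u) nf"
    and "refutable nf A"
  shows "\<not> satisfiable TYPE('u) A"
  using main[OF assms(1) assms(2)] unfolding satisfiable_def by blast

end
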